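(* Let $E$ be an extension of $\mathbb{Z}_\mathrm{max}$ and let $n$ be a positive integer. Then there is at most one subextension $L$ of $E$ (a subsemifield of $E$ containing the image of $\mathbb{Z}_\mathrm{max}$) such that $\mathrm{ui}(L/\mathbb{Z}_\mathrm{max})=n$.
   Context: A semifield is a commutative semiring in which every nonzero element is a unit. $\mathbb{Z}_\mathrm{max}=\mathbb{Z}\cup\{-\infty\}$ is the semifield with addition $\max$ and multiplication ordinary addition. An extension of a semifield $K$ is a semifield $E$ with an injective homomorphism $K\to E$. The unit index is $\mathrm{ui}(L/K)=|L^\times/K^\times|$. *)

theory Defs
  imports "HOL-Algebra.Ring"
begin

definition semifield :: "('a, 'b) ring_scheme \<Rightarrow> bool" where
  "semifield R \<longleftrightarrow> semiring R \<and> comm_monoid R \<and> \<one>\<^bsub>R\<^esub> \<noteq> \<zero>\<^bsub>R\<^esub> \<and>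
     (\<forall>x \<in> carrier R - {\<zero>\<^bsub>R\<^esub>}. x \<in> Units R)"

text \<open>The semifield Z_max = Z \<union> {-\<infinity>}; None represents -\<infinity>, addition is max,
  multiplication is ordinary addition.\<close>
definition zmax_add :: "int option \<Rightarrow> int option \<Rightarrow> int option" where
  "zmax_add a b = (case a of None \<Rightarrow> b | Some x \<Rightarrow>
      (case b of None \<Rightarrow> Some x | Some y \<Rightarrow> Some (max x y)))"

definition zmax_mult :: "int option \<Rightarrow> int option \<Rightarrow> int option" where
  "zmax_mult a b = (case a of None \<Rightarrow> None | Some x \<Rightarrow>
      (case b of None \<Rightarrow> None | Some y \<Rightarrow> Some (x + y)))"

definition Zmax :: "int option ring" where
  "Zmax = \<lparr>carrier = UNIV, monoid.mult = zmax_mult, one = Some 0,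
           zero = None, add = zmax_add\<rparr>"

definition semifield_hom :: "('a, 'c) ring_scheme \<Rightarrow> ('b, 'd) ring_scheme \<Rightarrow> ('a \<Rightarrow> 'b) \<Rightarrow> bool" where
  "semifield_hom K E h \<longleftrightarrow> h \<in> ring_hom K E \<and> h \<zero>\<^bsub>K\<^esub> = \<zero>\<^bsub>E\<^esub>"

definition extension :: "('a, 'c) ring_scheme \<Rightarrow> ('b, 'd) ring_scheme \<Rightarrow> ('a \<Rightarrow> 'b) \<Rightarrow> bool" where
  "extension K E h \<longleftrightarrow> semifield K \<and> semifield E \<and> semifield_hom K E h \<and> inj_on h (carrier K)"

definition subsemifield :: "'b set \<Rightarrow> ('b, 'd) ring_scheme \<Rightarrow> bool" where
  "subsemifield L E \<longleftrightarrow> L \<subseteq> carrier E \<and> \<zero>\<^bsub>E\<^esub> \<in> L \<and> \<one>\<^bsub>E\<^esub> \<in> L \<and>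
     (\<forall>x \<in> L. \<forall>y \<in> L. x \<oplus>\<^bsub>E\<^esub> y \<in> L \<and> x \<otimes>\<^bsub>E\<^esub> y \<in> L) \<and>
     (\<forall>x \<in> L - {\<zero>\<^bsub>E\<^esub>}. inv\<^bsub>E\<^esub> x \<in> L)"

definition subextension :: "('a, 'c) ring_scheme \<Rightarrow> ('b, 'd) ring_scheme \<Rightarrow> ('a \<Rightarrow> 'b) \<Rightarrow> 'b set \<Rightarrow> bool" where
  "subextension K E h L \<longleftrightarrow> subsemifield L E \<and> h ` carrier K \<subseteq> L"

text \<open>Unit index ui(L/K) = |L^\<times>/K^\<times>|, where K^\<times> is identified with its image h(K) - {0} in E;
  the quotient group is represented by its set of cosets x\<cdot>K^\<times>, x \<in> L^\<times>.
  (card is 0 for an infinite index.)\<close>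
definition unit_index :: "('a, 'c) ring_scheme \<Rightarrow> ('b, 'd) ring_scheme \<Rightarrow> ('a \<Rightarrow> 'b) \<Rightarrow> 'b set \<Rightarrow> nat" where
  "unit_index K E h L =
     card {(\<lambda>y. x \<otimes>\<^bsub>E\<^esub> y) ` (h ` carrier K - {\<zero>\<^bsub>E\<^esub>}) | x. x \<in> L - {\<zero>\<^bsub>E\<^esub>}}"

end

theory Submission
  imports Defs "HOL-Algebra.Multiplicative_Group"
begin

lemma Zmax_simps[simp]:
  "carrier Zmax = UNIV" "\<one>\<^bsub>Zmax\<^esub> = Some 0" "\<zero>\<^bsub>Zmax\<^esub> = None"
  "Some a \<otimes>\<^bsub>Zmax\<^esub> Some b = Some (a+b)"
  "Some a \<oplus>\<^bsub>Zmax\<^esub> Some b = Some (max a b)"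
  by (simp_all add: Zmax_def zmax_mult_def zmax_add_def)

locale zext = semiring E + comm_monoid E for E :: "('b,'d) ring_scheme" (structure) +
  fixes h :: "int option \<Rightarrow> 'b"
  assumes one_ne: "\<one> \<noteq> \<zero>"
    and units: "\<And>x. x \<in> carrier E \<Longrightarrow> x \<noteq> \<zero> \<Longrightarrow> x \<in> Units E"
    and hom: "h \<in> ring_hom Zmax E"
    and hz: "h None = \<zero>"
    and hinj: "inj h"
begin

lemma h_carr[simp]: "h x \<in> carrier E"
  using hom unfolding ring_hom_def by auto

lemma h_mult: "h (Some a) \<otimes> h (Some b) = h (Some (a+b))"
proof -
  have "\<forall>x y. h (x \<otimes>\<^bsub>Zmax\<^esub> y) = h x \<otimes> h y"
    using hom unfolding ring_hom_def by auto
  then have "h (Some a \<otimes>\<^bsub>Zmax\<^esub> Some b) = h (Some a) \<otimes> h (Some b)" by blast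
  then show ?thesis by simp
qed

lemma h_add: "h (Some a) \<oplus> h (Some b) = h (Some (max a b))"
proof -
  have "\<forall>x y. h (x \<oplus>\<^bsub>Zmax\<^esub> y) = h x \<oplus> h y"
    using hom unfolding ring_hom_def by auto
  then have "h (Some a \<oplus>\<^bsub>Zmax\<^esub> Some b) = h (Some a) \<oplus> h (Some b)" by blast
  then show ?thesis by simp
qed

lemma h_one: "h (Some 0) = \<one>"
proof -
  have "h \<one>\<^bsub>Zmax\<^esub> = \<one>" using hom unfolding ring_hom_def by simp
  then show ?thesis by simp
qed

lemma h_nz: "h (Some a) \<noteq> \<zero>"
  using hinj hz by (metis injD option.distinct(1))

lemma h_eq: "h (Some a) = h (Some b) \<longleftrightarrow> a = b"
  using hinj by (auto dest: injD)

lemma h_pow: "h (Some k) [^] (m::nat) = h (Some (k * int m))"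
proof (induction m)
  case 0 then show ?case by (simp add: h_one)
next
  case (Suc m) then show ?case by (simp add: h_mult algebra_simps)
qed

lemma idem1: "\<one> \<oplus> \<one> = \<one>"
  using h_add[of 0 0] h_one by simp

lemma idem: "x \<in> carrier E \<Longrightarrow> x \<oplus> x = x"
  by (metis idem1 r_distr r_one one_closed)

lemma zsf: "x \<in> carrier E \<Longrightarrow> y \<in> carrier E \<Longrightarrow> x \<oplus> y = \<zero> \<Longrightarrow> x = \<zero>"
proof -
  assume a: "x \<in> carrier E" "y \<in> carrier E" "x \<oplus> y = \<zero>"
  have "x = x \<oplus> (x \<oplus> y)" using a by simp
  also have "\<dots> = (x \<oplus> x) \<oplus> y" using a by (simp add: a_assoc)
  also have "\<dots> = \<zero>" using a idem by simp
  finally show ?thesis .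
qed

lemma unit_nz: "x \<in> Units E \<Longrightarrow> x \<noteq> \<zero>"
  using one_ne by (metis Units_r_inv Units_inv_closed Units_closed l_null)

lemma mult_nz: "x \<in> carrier E \<Longrightarrow> y \<in> carrier E \<Longrightarrow> x \<noteq> \<zero> \<Longrightarrow> y \<noteq> \<zero> \<Longrightarrow> x \<otimes> y \<noteq> \<zero>"
  using units unit_nz Units_m_closed by blast

fun T :: "'b \<Rightarrow> nat \<Rightarrow> 'b" where
  "T u 0 = \<zero>"
| "T u (Suc k) = T u k \<oplus> u [^] Suc k"

lemma T_carr: "u \<in> carrier E \<Longrightarrow> T u k \<in> carrier E"
  by (induction k) auto

lemma T_absorb: "u \<in> carrier E \<Longrightarrow> 1 \<le> j \<Longrightarrow> j \<le> k \<Longrightarrow> u [^] j \<oplus> T u k = T u k"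
proof (induction k)
  case 0 then show ?case by simp
next
  case (Suc k)
  show ?case
  proof (cases "j = Suc k")
    case True
    have c: "T u k \<in> carrier E" "u [^] Suc k \<in> carrier E" using Suc.prems T_carr by auto
    have "u [^] Suc k \<oplus> (T u k \<oplus> u [^] Suc k) = T u k \<oplus> (u [^] Suc k \<oplus> u [^] Suc k)"
      using c by (simp add: a_lcomm)
    also have "\<dots> = T u k \<oplus> u [^] Suc k" using c idem by simp
    finally show ?thesis using True by simp
  next
    case False
    then have "u [^] j \<oplus> T u k = T u k" using Suc by simp
    moreover have "u [^] j \<oplus> (T u k \<oplus> u [^] Suc k) = (u [^] j \<oplus> T u k) \<oplus> u [^] Suc k"
      using Suc.prems T_carr by (simp add: a_assoc)
    ultimately show ?thesis by simp
  qed
qed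

lemma T_mult: "u \<in> carrier E \<Longrightarrow> (\<one> \<oplus> T u k) \<otimes> u = T u (Suc k)"
proof (induction k)
  case 0 then show ?case by simp
next
  case (Suc k)
  have "(\<one> \<oplus> T u (Suc k)) \<otimes> u = ((\<one> \<oplus> T u k) \<oplus> u [^] Suc k) \<otimes> u"
    using Suc.prems T_carr by (simp add: a_assoc)
  also have "\<dots> = (\<one> \<oplus> T u k) \<otimes> u \<oplus> u [^] Suc k \<otimes> u"
    using Suc.prems T_carr by (simp add: l_distr)
  also have "\<dots> = T u (Suc (Suc k))"
    using Suc by (simp add: nat_pow_Suc)
  finally show ?case .
qed

lemma torsion_free:
  fixes m :: nat
  assumes u: "u \<in> carrier E" "u \<noteq> \<zero>" and m: "m \<ge> 1" and um: "u [^] m = \<one>"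
  shows "u = \<one>"
proof -
  have a: "\<one> \<oplus> T u m = T u m" using T_absorb[OF u(1) m order.refl] um by simp
  have b: "u \<oplus> T u m = T u m" using T_absorb[OF u(1) order.refl m] u by simp
  have "T u m \<otimes> u = T u (Suc m)" using T_mult[OF u(1), of m] a by simp
  also have "\<dots> = T u m \<oplus> u" using um u by (simp add: nat_pow_Suc)
  also have "\<dots> = T u m" using b u T_carr a_comm by metis
  finally have c: "T u m \<otimes> u = T u m" .
  have nz: "T u m \<noteq> \<zero>" using a zsf[of \<one> "T u m"] T_carr[OF u(1)] one_ne by auto
  then have un: "T u m \<in> Units E" using units T_carr u by blast
  have "T u m \<otimes> u = T u m \<otimes> \<one>" using c T_carr u by simp
  then show ?thesis using Units_l_cancel[OF un u(1) one_closed] by simp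
qed

lemma roots:
  fixes m :: nat
  assumes x: "x \<in> carrier E" "x \<noteq> \<zero>" and y: "y \<in> carrier E" "y \<noteq> \<zero>"
    and m: "m \<ge> 1" and e: "x [^] m = y [^] m"
  shows "x = y"
proof -
  have yu: "y \<in> Units E" using units y by blast
  let ?iy = "inv y"
  have iy: "?iy \<in> carrier E" "?iy \<noteq> \<zero>" using yu unit_nz Units_inv_Units by auto
  have "(x \<otimes> ?iy) [^] m = x [^] m \<otimes> ?iy [^] m"
    using x iy by (intro pow_mult_distrib) (simp_all add: m_comm)
  also have "\<dots> = y [^] m \<otimes> ?iy [^] m" using e by simp
  also have "\<dots> = (y \<otimes> ?iy) [^] m"
    using y iy by (intro pow_mult_distrib[symmetric]) (simp_all add: m_comm)
  also have "\<dots> = \<one>" using yu by simp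
  finally have "x \<otimes> ?iy = \<one>"
    using torsion_free[of "x \<otimes> ?iy" m] x iy m mult_nz by auto
  then have "x \<otimes> ?iy \<otimes> y = y" using y by simp
  moreover have "x \<otimes> ?iy \<otimes> y = x \<otimes> (?iy \<otimes> y)" using yu x by (intro m_assoc) auto
  moreover have "?iy \<otimes> y = \<one>" using yu by simp
  ultimately show ?thesis using x by simp
qed


definition Gs :: "'b set" where "Gs = range (\<lambda>k. h (Some k))"
definition C :: "'b \<Rightarrow> 'b set" where "C x = (\<lambda>y. x \<otimes> y) ` Gs"
definition cos :: "'b set \<Rightarrow> 'b set set" where "cos A = {C x | x. x \<in> A}"
definition Rn :: "nat \<Rightarrow> 'b set" where
  "Rn n = {x \<in> carrier E. x \<noteq> \<zero> \<and> (\<exists>j. x [^] n = h (Some j))}"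

lemma Gs_eq: "h ` carrier Zmax - {\<zero>} = Gs"
proof -
  have "h ` UNIV = insert (h None) (range (\<lambda>k. h (Some k)))"
    by (auto simp: image_iff) (metis option.exhaust)
  then show ?thesis unfolding Gs_def using h_nz hz by auto
qed

lemma Gs_carr: "Gs \<subseteq> carrier E" unfolding Gs_def by auto

lemma shift_Gs: "(\<lambda>z. h (Some c) \<otimes> z) ` Gs = Gs"
proof
  show "(\<lambda>z. h (Some c) \<otimes> z) ` Gs \<subseteq> Gs" unfolding Gs_def by (auto simp: h_mult)
  show "Gs \<subseteq> (\<lambda>z. h (Some c) \<otimes> z) ` Gs"
  proof
    fix g assume "g \<in> Gs"
    then obtain k where "g = h (Some k)" unfolding Gs_def by auto
    then have "g = h (Some c) \<otimes> h (Some (k - c))" by (simp add: h_mult)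
    then show "g \<in> (\<lambda>z. h (Some c) \<otimes> z) ` Gs" unfolding Gs_def by auto
  qed
qed

lemma C_shift: "y \<in> carrier E \<Longrightarrow> C (y \<otimes> h (Some c)) = C y"
proof -
  assume y: "y \<in> carrier E"
  have "C (y \<otimes> h (Some c)) = (\<lambda>z. y \<otimes> z) ` ((\<lambda>z. h (Some c) \<otimes> z) ` Gs)"
    unfolding C_def image_image using y Gs_carr by (intro image_cong) (auto simp: m_assoc)
  then show ?thesis by (simp add: shift_Gs C_def)
qed

definition key :: "nat \<Rightarrow> 'b \<Rightarrow> int" where
  "key n x = (SOME j. x [^] n = h (Some j)) mod int n"

lemma key_eq:
  assumes n: "n > 0" and x: "x \<in> Rn n" and y: "y \<in> Rn n" and k: "key n x = key n y"
  shows "C x = C y"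
proof -
  define a where "a = (SOME j. x [^] n = h (Some j))"
  define b where "b = (SOME j. y [^] n = h (Some j))"
  have xa: "x [^] n = h (Some a)" using x unfolding Rn_def a_def by (auto intro: someI_ex)
  have yb: "y [^] n = h (Some b)" using y unfolding Rn_def b_def by (auto intro: someI_ex)
  have "a mod int n = b mod int n" using k unfolding key_def a_def b_def by simp
  then have "int n dvd a - b" by (simp add: mod_eq_dvd_iff)
  then obtain c where c: "a - b = int n * c" by (auto elim: dvdE)
  have ycar: "y \<in> carrier E" "y \<noteq> \<zero>" and xcar: "x \<in> carrier E" "x \<noteq> \<zero>" using x y unfolding Rn_def by auto
  have "(y \<otimes> h (Some c)) [^] n = y [^] n \<otimes> h (Some c) [^] n"
    using ycar pow_mult_distrib m_comm by simp
  also have "\<dots> = h (Some a)" using yb c by (simp add: h_pow h_mult algebra_simps)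
  finally have "x = y \<otimes> h (Some c)"
    using roots[of x "y \<otimes> h (Some c)" n] xcar ycar n xa mult_nz h_nz by auto
  then show ?thesis using C_shift ycar by simp
qed

lemma count:
  assumes n: "n > 0"
  shows "finite (cos (Rn n)) \<and> card (cos (Rn n)) \<le> n"
proof -
  define \<psi> where "\<psi> c = key n (SOME y. y \<in> Rn n \<and> c = C y)" for c
  have rep: "(SOME y. y \<in> Rn n \<and> c = C y) \<in> Rn n \<and> c = C (SOME y. y \<in> Rn n \<and> c = C y)"
    if "c \<in> cos (Rn n)" for c
  proof -
    have "\<exists>y. y \<in> Rn n \<and> c = C y" using that unfolding cos_def by auto
    then show ?thesis by (rule someI_ex)
  qed
  have inj: "inj_on \<psi> (cos (Rn n))"
  proof (rule inj_onI)
    fix c1 c2 assume c: "c1 \<in> cos (Rn n)" "c2 \<in> cos (Rn n)" "\<psi> c1 = \<psi> c2"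
    show "c1 = c2" using rep[OF c(1)] rep[OF c(2)] key_eq[OF n] c(3) unfolding \<psi>_def by metis
  qed
  have sub: "\<psi> ` cos (Rn n) \<subseteq> {0..<int n}" using n unfolding \<psi>_def key_def by auto
  have "finite (cos (Rn n))" using inj_on_finite[OF inj sub] by simp
  moreover have "card (cos (Rn n)) \<le> card {0..<int n}" using card_inj_on_le[OF inj sub] by simp
  ultimately show ?thesis by simp
qed


lemma L_in_Rn:
  assumes sub: "subsemifield L E" and hL: "range h \<subseteq> L"
    and card: "card (cos (L - {\<zero>})) = n" and n: "n > 0"
  shows "L - {\<zero>} \<subseteq> Rn n"
proof
  fix x assume xL: "x \<in> L - {\<zero>}"
  have Lc: "L \<subseteq> carrier E" and Lm: "\<And>a b. a \<in> L \<Longrightarrow> b \<in> L \<Longrightarrow> a \<otimes> b \<in> L"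
    and Li: "\<And>a. a \<in> L - {\<zero>} \<Longrightarrow> inv a \<in> L" and L1: "\<one> \<in> L"
    using sub unfolding subsemifield_def by auto
  define LG where "LG = \<lparr>carrier = L - {\<zero>}, monoid.mult = (\<lambda>a b. a \<otimes> b), one = \<one>\<rparr>"
  have LG_simps[simp]: "carrier LG = L - {\<zero>}" "a \<otimes>\<^bsub>LG\<^esub> b = a \<otimes> b" "\<one>\<^bsub>LG\<^esub> = \<one>" for a b
    by (simp_all add: LG_def)
  have cg: "comm_group LG"
  proof (rule comm_groupI)
    fix a b assume "a \<in> carrier LG" "b \<in> carrier LG"
    then have "a \<in> carrier E" "b \<in> carrier E" "a \<noteq> \<zero>" "b \<noteq> \<zero>" "a \<in> L" "b \<in> L" using Lc by auto
    then show "a \<otimes>\<^bsub>LG\<^esub> b \<in> carrier LG" using Lm[of a b] mult_nz[of a b] by simp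
  next
    show "\<one>\<^bsub>LG\<^esub> \<in> carrier LG" using L1 one_ne by simp
  next
    fix a b c assume "a \<in> carrier LG" "b \<in> carrier LG" "c \<in> carrier LG"
    then show "a \<otimes>\<^bsub>LG\<^esub> b \<otimes>\<^bsub>LG\<^esub> c = a \<otimes>\<^bsub>LG\<^esub> (b \<otimes>\<^bsub>LG\<^esub> c)"
      using Lc by (auto intro!: m_assoc)
  next
    fix a b assume "a \<in> carrier LG" "b \<in> carrier LG"
    then show "a \<otimes>\<^bsub>LG\<^esub> b = b \<otimes>\<^bsub>LG\<^esub> a" using Lc by (auto intro!: m_comm)
  next
    fix a assume "a \<in> carrier LG"
    then show "\<one>\<^bsub>LG\<^esub> \<otimes>\<^bsub>LG\<^esub> a = a" using Lc by auto
  next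
    fix a assume a: "a \<in> carrier LG"
    then have au: "a \<in> Units E" using Lc units by auto
    have "inv a \<in> carrier LG" using a Li au unit_nz Units_inv_Units by auto
    moreover have "inv a \<otimes>\<^bsub>LG\<^esub> a = \<one>\<^bsub>LG\<^esub>" using au by simp
    ultimately show "\<exists>y\<in>carrier LG. y \<otimes>\<^bsub>LG\<^esub> a = \<one>\<^bsub>LG\<^esub>" by blast
  qed
  interpret LG: comm_group LG by (rule cg)
  have GsL: "Gs \<subseteq> carrier LG" unfolding Gs_def using hL h_nz by auto
  have sg: "subgroup Gs LG"
  proof (rule LG.subgroupI)
    show "Gs \<subseteq> carrier LG" by (rule GsL)
    show "Gs \<noteq> {}" unfolding Gs_def by auto
  next
    fix a assume "a \<in> Gs"
    then obtain k where k: "a = h (Some k)" unfolding Gs_def by auto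
    have "inv\<^bsub>LG\<^esub> a = h (Some (-k))"
      using LG.inv_equality[of "h (Some (-k))" a] k GsL \<open>a \<in> Gs\<close>
      by (simp add: h_mult h_one Gs_def subset_iff)
    then show "inv\<^bsub>LG\<^esub> a \<in> Gs" unfolding Gs_def by auto
  next
    fix a b assume "a \<in> Gs" "b \<in> Gs"
    then show "a \<otimes>\<^bsub>LG\<^esub> b \<in> Gs" unfolding Gs_def by (auto simp: h_mult)
  qed
  have nm: "normal Gs LG" using LG.subgroup_imp_normal[OF sg] .
  interpret N: normal Gs LG by (rule nm)
  have rc: "Gs #>\<^bsub>LG\<^esub> a = C a" if "a \<in> carrier LG" for a
  proof -
    have ac: "a \<in> carrier E" using that Lc by auto
    have "(\<Union>g\<in>Gs. {g \<otimes> a}) = (\<lambda>y. a \<otimes> y) ` Gs"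
      using ac Gs_carr by (auto simp: image_iff intro: m_comm)
    then show ?thesis unfolding r_coset_def C_def by simp
  qed
  have carrM: "carrier (LG Mod Gs) = cos (L - {\<zero>})"
    unfolding FactGroup_def RCOSETS_def cos_def using rc by auto
  interpret M: group "LG Mod Gs" by (rule N.factorgroup_is_group)
  have xc: "x \<in> carrier LG" using xL by simp
  have pw: "(Gs #>\<^bsub>LG\<^esub> x) [^]\<^bsub>LG Mod Gs\<^esub> k = Gs #>\<^bsub>LG\<^esub> (x [^]\<^bsub>LG\<^esub> k)" for k :: nat
  proof (induction k)
    case 0 then show ?case using LG.coset_mult_one[OF GsL] by (simp add: FactGroup_def)
  next
    case (Suc k)
    have "(Gs #>\<^bsub>LG\<^esub> x) [^]\<^bsub>LG Mod Gs\<^esub> Suc k = (Gs #>\<^bsub>LG\<^esub> x) [^]\<^bsub>LG Mod Gs\<^esub> k \<otimes>\<^bsub>LG Mod Gs\<^esub> (Gs #>\<^bsub>LG\<^esub> x)"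
      by (simp add: M.nat_pow_Suc)
    also have "\<dots> = Gs #>\<^bsub>LG\<^esub> (x [^]\<^bsub>LG\<^esub> k \<otimes>\<^bsub>LG\<^esub> x)"
      using Suc N.rcos_sum xc LG.nat_pow_closed by (simp add: FactGroup_def)
    finally show ?case by (simp add: LG.nat_pow_Suc)
  qed
  have pweq: "x [^]\<^bsub>LG\<^esub> k = x [^] k" for k :: nat
    by (induction k) (simp_all add: LG.nat_pow_Suc nat_pow_Suc)
  have "Gs #>\<^bsub>LG\<^esub> x \<in> carrier (LG Mod Gs)"
    unfolding FactGroup_def RCOSETS_def using xc by auto
  then have "(Gs #>\<^bsub>LG\<^esub> x) [^]\<^bsub>LG Mod Gs\<^esub> order (LG Mod Gs) = \<one>\<^bsub>LG Mod Gs\<^esub>"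
    by (rule M.pow_order_eq_1)
  moreover have "order (LG Mod Gs) = n" unfolding order_def using carrM card by simp
  ultimately have "Gs #>\<^bsub>LG\<^esub> (x [^]\<^bsub>LG\<^esub> n) = Gs" using pw by (simp add: FactGroup_def)
  moreover have "x [^]\<^bsub>LG\<^esub> n \<in> Gs #>\<^bsub>LG\<^esub> (x [^]\<^bsub>LG\<^esub> n)"
    using LG.rcos_self[OF LG.nat_pow_closed[OF xc] sg] .
  ultimately have "x [^] n \<in> Gs" using pweq by simp
  then show "x \<in> Rn n" using xL Lc unfolding Rn_def Gs_def by auto
qed

lemma L_eq:
  assumes sub: "subsemifield L E" and hL: "range h \<subseteq> L"
    and card: "card (cos (L - {\<zero>})) = n" and n: "n > 0"
  shows "L = insert \<zero> (Rn n)"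
proof -
  have s: "L - {\<zero>} \<subseteq> Rn n" by (rule L_in_Rn[OF assms])
  have cs: "cos (L - {\<zero>}) \<subseteq> cos (Rn n)" using s unfolding cos_def by auto
  have ceq: "cos (L - {\<zero>}) = cos (Rn n)"
    using count[OF n] card cs by (intro card_seteq) auto
  have Lc: "L \<subseteq> carrier E" and Lm: "\<And>a b. a \<in> L \<Longrightarrow> b \<in> L \<Longrightarrow> a \<otimes> b \<in> L"
    and L0: "\<zero> \<in> L"
    using sub unfolding subsemifield_def by auto
  have "Rn n \<subseteq> L"
  proof
    fix x assume x: "x \<in> Rn n"
    then have "C x \<in> cos (L - {\<zero>})" using ceq unfolding cos_def by auto
    then obtain y where y: "y \<in> L - {\<zero>}" "C x = C y" unfolding cos_def by auto
    have "x \<in> C x" unfolding C_def Gs_def using x h_one unfolding Rn_def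
      by (auto simp: image_iff intro!: exI[of _ 0])
    then obtain k where "x = y \<otimes> h (Some k)" using y unfolding C_def Gs_def by auto
    moreover have "h (Some k) \<in> L" using hL by auto
    ultimately show "x \<in> L" using Lm y by auto
  qed
  then show ?thesis using s L0 by auto
qed

end

theorem mainTheorem7:
  fixes E :: "('b, 'd) ring_scheme" and h :: "int option \<Rightarrow> 'b" and n :: nat
  assumes "extension Zmax E h"
    and "n > 0"
  shows "\<forall>L1 L2. subextension Zmax E h L1 \<and> unit_index Zmax E h L1 = n \<and>
                 subextension Zmax E h L2 \<and> unit_index Zmax E h L2 = n \<longrightarrow> L1 = L2"
proof -
  have sf: "semifield E" and hom: "h \<in> ring_hom Zmax E" and hz: "h None = \<zero>\<^bsub>E\<^esub>"
    and inj: "inj h"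
    using assms(1) unfolding extension_def semifield_hom_def by auto
  have sr: "semiring E" and cm: "comm_monoid E" and o: "\<one>\<^bsub>E\<^esub> \<noteq> \<zero>\<^bsub>E\<^esub>"
    and u: "\<And>x. x \<in> carrier E \<Longrightarrow> x \<noteq> \<zero>\<^bsub>E\<^esub> \<Longrightarrow> x \<in> Units E"
    using sf unfolding semifield_def by auto
  interpret Z: zext E h
    by (rule zext.intro[OF sr cm]) (unfold_locales, use o u hom hz inj in auto)
  have ui: "unit_index Zmax E h L = card (Z.cos (L - {\<zero>\<^bsub>E\<^esub>}))" for L
    unfolding unit_index_def Z.Gs_eq Z.cos_def Z.C_def by simp
  show ?thesis
  proof (intro allI impI)
    fix L1 L2
    assume a: "subextension Zmax E h L1 \<and> unit_index Zmax E h L1 = n \<and>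
                 subextension Zmax E h L2 \<and> unit_index Zmax E h L2 = n"
    have "L1 = insert \<zero>\<^bsub>E\<^esub> (Z.Rn n)"
      using a Z.L_eq[of L1 n] assms(2) unfolding subextension_def ui by auto
    moreover have "L2 = insert \<zero>\<^bsub>E\<^esub> (Z.Rn n)"
      using a Z.L_eq[of L2 n] assms(2) unfolding subextension_def ui by auto
    ultimately show "L1 = L2" by simp
  qed
qed

end
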